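(* For every $d$-dimensional state $\rho$ and every maximally coherent state $|\Psi_d\rangle=d^{-1/2}\sum_{j=1}^de^{i\theta_j}|j\rangle$ ($\theta_j\in\mathbb R$), \[ \mu_d(\rho)\ge\log d+\log\langle\Psi_d|\rho|\Psi_d\rangle . \]
   Context: Fixed computational basis; $\Delta$ the dephasing map (deleting off-diagonal entries); logs base 2. $R^\rho=\Delta(\rho)^{-1/2}\rho\Delta(\rho)^{-1/2}$ (inverse on the support) and $\mu_k(\rho)=\max_{I\subseteq[d],|I|\le k}\log\|\Pi_IR^\rho\Pi_I\|_\infty$ with $\Pi_I=\sum_{i\in I}|i\rangle\langle i|$; in particular $\mu_d(\rho)=\log\|R^\rho\|_\infty$. *)

theory Defs
  imports "HOL-Analysis.Analysis"
begin

text \<open>States on C^d are d x d complex matrices indexed by a finite type 'n, d = CARD('n).\<close>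

definition cinner_vec :: "complex ^ 'n \<Rightarrow> complex ^ 'n \<Rightarrow> complex" where
  "cinner_vec x y = (\<Sum>i\<in>UNIV. cnj (x $ i) * y $ i)"

definition psd :: "complex ^ 'n ^ 'n \<Rightarrow> bool" where
  "psd A \<longleftrightarrow> (\<forall>x. Im (cinner_vec x (A *v x)) = 0 \<and> Re (cinner_vec x (A *v x)) \<ge> 0)"

definition density :: "complex ^ 'n ^ 'n \<Rightarrow> bool" where
  "density \<rho> \<longleftrightarrow> psd \<rho> \<and> (\<Sum>i\<in>UNIV. \<rho> $ i $ i) = 1"

definition dephase :: "complex ^ 'n ^ 'n \<Rightarrow> complex ^ 'n ^ 'n" where
  "dephase \<rho> = (\<chi> i j. if i = j then \<rho> $ i $ j else 0)"

text \<open>Delta(rho)^(-1/2), inverse taken on the support.\<close>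
definition dephase_inv_sqrt :: "complex ^ 'n ^ 'n \<Rightarrow> complex ^ 'n ^ 'n" where
  "dephase_inv_sqrt \<rho> = (\<chi> i j. if i = j \<and> Re (dephase \<rho> $ i $ i) > 0
        then complex_of_real (1 / sqrt (Re (dephase \<rho> $ i $ i))) else 0)"

definition Rmat :: "complex ^ 'n ^ 'n \<Rightarrow> complex ^ 'n ^ 'n" where
  "Rmat \<rho> = dephase_inv_sqrt \<rho> ** \<rho> ** dephase_inv_sqrt \<rho>"

definition opnorm :: "complex ^ 'n ^ 'n \<Rightarrow> real" where
  "opnorm A = onorm (\<lambda>x. A *v x)"

definition proj :: "'n set \<Rightarrow> complex ^ 'n ^ 'n" where
  "proj I = (\<chi> i j. if i = j \<and> i \<in> I then 1 else 0)"

text \<open>mu_k; the empty index set (value log 0 = -infinity) is omitted since it never attains the max.\<close>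
definition mu :: "nat \<Rightarrow> complex ^ 'n ^ 'n \<Rightarrow> real" where
  "mu k \<rho> = Max {log 2 (opnorm (proj I ** Rmat \<rho> ** proj I)) | I. I \<noteq> {} \<and> card I \<le> k}"

definition max_coherent :: "('n \<Rightarrow> real) \<Rightarrow> complex ^ 'n" where
  "max_coherent \<theta> = (\<chi> j. exp (\<i> * complex_of_real (\<theta> j)) / complex_of_real (sqrt (real CARD('n))))"

end

theory Submission
  imports Defs
begin
lemma quad_expand:
  "cinner_vec x (A *v x) = (\<Sum>k\<in>UNIV. \<Sum>l\<in>UNIV. cnj (x $ k) * A $ k $ l * x $ l)"
  by (simp add: cinner_vec_def matrix_vector_mult_def sum_distrib_left mult.assoc)
lemma H: "(\<Sum>k\<in>UNIV. \<Sum>l\<in>UNIV. cnj (if k = i then s else 0) * A $ k $ l * (if l = j then r else 0)) = cnj s * A $ i $ j * (r::complex)"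
proof -
  have inner: "(\<Sum>l\<in>UNIV. c * A $ k $ l * (if l = j then r else 0)) = c * A $ k $ j * r" for c k
  proof -
    have "(\<Sum>l\<in>UNIV. c * A $ k $ l * (if l = j then r else 0)) = (\<Sum>l\<in>UNIV. if l = j then c * A $ k $ l * r else 0)"
      by (rule sum.cong) auto
    then show ?thesis by simp
  qed
  have "(\<Sum>k\<in>UNIV. \<Sum>l\<in>UNIV. cnj (if k = i then s else 0) * A $ k $ l * (if l = j then r else 0))
    = (\<Sum>k\<in>UNIV. if k = i then cnj s * A $ k $ j * r else 0)"
    by (rule sum.cong) (auto simp: inner)
  also have "\<dots> = cnj s * A $ i $ j * r" by simp
  finally show ?thesis .
qed
lemma quad_gen:
  fixes x :: "complex ^ 'a"
  assumes "\<And>k. x $ k = (if k = i then t else 0) + (if k = j then u else 0)"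
  shows "cinner_vec x (A *v x) = cnj t * A $ i $ i * t + cnj t * A $ i $ j * u + cnj u * A $ j $ i * t + cnj u * A $ j $ j * u"
proof -
  have "cinner_vec x (A *v x) = (\<Sum>k\<in>UNIV. \<Sum>l\<in>UNIV.
     cnj (if k = i then t else 0) * A $ k $ l * (if l = i then t else 0)
   + cnj (if k = i then t else 0) * A $ k $ l * (if l = j then u else 0)
   + cnj (if k = j then u else 0) * A $ k $ l * (if l = i then t else 0)
   + cnj (if k = j then u else 0) * A $ k $ l * (if l = j then u else 0))"
    unfolding quad_expand assms by (simp add: algebra_simps)
  also have "\<dots> = cnj t * A $ i $ i * t + cnj t * A $ i $ j * u + cnj u * A $ j $ i * t + cnj u * A $ j $ j * u"
    by (simp only: sum.distrib H)
  finally show ?thesis .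
qed
lemma Rmat_entry:
  fixes \<rho> :: "complex ^ 'n ^ 'n"
  defines "g \<equiv> \<lambda>i. if Re (\<rho> $ i $ i) > 0 then 1 / sqrt (Re (\<rho> $ i $ i)) else 0"
  shows "Rmat \<rho> $ i $ j = complex_of_real (g i) * \<rho> $ i $ j * complex_of_real (g j)"
proof -
  have G: "dephase_inv_sqrt \<rho> $ a $ b = (if a = b then complex_of_real (g a) else 0)" for a b
    by (simp add: dephase_inv_sqrt_def dephase_def g_def)
  have s1: "(dephase_inv_sqrt \<rho> ** \<rho>) $ a $ b = complex_of_real (g a) * \<rho> $ a $ b" for a b
    unfolding matrix_matrix_mult_def by (simp add: G if_distrib[of "\<lambda>x. x * _"] cong: if_cong)
  show ?thesis
    unfolding Rmat_def matrix_matrix_mult_def[of "dephase_inv_sqrt \<rho> ** \<rho>"]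
    by (simp add: G s1 if_distrib[of "\<lambda>x. _ * x"] cong: if_cong)
qed
lemma psd_diag:
  assumes "psd A"
  shows "Im (A $ i $ i) = 0 \<and> Re (A $ i $ i) \<ge> 0"
proof -
  let ?x = "(\<chi> k. if k = i then 1 else 0) :: complex ^ 'a"
  have e: "cinner_vec ?x (A *v ?x) = A $ i $ i"
    by (subst quad_gen[of _ i 1 i 0]) auto
  have "Im (cinner_vec ?x (A *v ?x)) = 0 \<and> Re (cinner_vec ?x (A *v ?x)) \<ge> 0"
    using assms unfolding psd_def by blast
  then show ?thesis unfolding e .
qed

lemma slope_zero:
  fixes m c :: real
  assumes "\<And>s. s * m + c \<ge> 0"
  shows "m = 0"
proof (rule ccontr)
  assume "m \<noteq> 0"
  have "c \<ge> 0" using assms[of 0] by simp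
  have "(- (c + 1) / m) * m + c \<ge> 0" using assms by blast
  with \<open>m \<noteq> 0\<close> show False by simp
qed

lemma psd_zero_row:
  assumes "psd A" and "A $ i $ i = 0"
  shows "A $ i $ j = 0 \<and> A $ j $ i = 0"
proof (cases "i = j")
  case True then show ?thesis using assms by simp
next
  case False
  let ?a = "A $ i $ j" and ?b = "A $ j $ i" and ?c = "A $ j $ j"
  have Q: "Im (cnj t * ?a + ?b * t + ?c) = 0 \<and> Re (cnj t * ?a + ?b * t + ?c) \<ge> 0" for t
  proof -
    let ?x = "(\<chi> k. if k = i then t else if k = j then 1 else 0) :: complex ^ 'a"
    have e: "cinner_vec ?x (A *v ?x) = cnj t * ?a + ?b * t + ?c"
      by (subst quad_gen[of _ i t j 1]) (use False assms(2) in auto)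
    have "Im (cinner_vec ?x (A *v ?x)) = 0 \<and> Re (cinner_vec ?x (A *v ?x)) \<ge> 0"
      using assms(1) unfolding psd_def by blast
    then show ?thesis unfolding e .
  qed
  have r1: "s * (Re ?a + Re ?b) + Re ?c \<ge> 0" for s
    using Q[of "complex_of_real s"] by (simp add: distrib_left mult.commute)
  have i1: "s * (Im ?a + Im ?b) + Im ?c = 0" for s
    using Q[of "complex_of_real s"] by (simp add: distrib_left mult.commute)
  have r2: "s * (Im ?a - Im ?b) + Re ?c \<ge> 0" for s
    using Q[of "\<i> * complex_of_real s"] by (simp add: right_diff_distrib mult.commute)
  have i2: "s * (Re ?b - Re ?a) + Im ?c = 0" for s
    using Q[of "\<i> * complex_of_real s"] by (simp add: right_diff_distrib mult.commute)
  have "Re ?a + Re ?b = 0" using slope_zero r1 by blast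
  moreover have "Im ?a - Im ?b = 0" using slope_zero r2 by blast
  moreover have "Im ?a + Im ?b = 0" using i1[of 0] i1[of 1] by simp
  moreover have "Re ?b - Re ?a = 0" using i2[of 0] i2[of 1] by simp
  ultimately show ?thesis by (simp add: complex_eq_iff)
qed

theorem lemma4:
  fixes \<rho> :: "complex ^ 'n ^ 'n" and \<theta> :: "'n \<Rightarrow> real"
  assumes "density \<rho>"
    and "Re (cinner_vec (max_coherent \<theta>) (\<rho> *v max_coherent \<theta>)) > 0"
  shows "mu CARD('n) \<rho> \<ge> log 2 (real CARD('n))
           + log 2 (Re (cinner_vec (max_coherent \<theta>) (\<rho> *v max_coherent \<theta>)))"
proof -
  define \<Psi> where "\<Psi> = max_coherent \<theta>"
  define q where "q = Re (cinner_vec \<Psi> (\<rho> *v \<Psi>))"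
  define d where "d = real CARD('n)"
  define p where "p = (\<lambda>i. Re (\<rho> $ i $ i))"
  define g where "g = (\<lambda>i. if Re (\<rho> $ i $ i) > 0 then 1 / sqrt (Re (\<rho> $ i $ i)) else 0)"
  define R where "R = Rmat \<rho>"
  define y where "y = (\<chi> i. complex_of_real (sqrt (p i)) * \<Psi> $ i)"
  have psd: "psd \<rho>" using assms(1) unfolding density_def by simp
  have dpos: "d > 0" unfolding d_def by simp
  have qpos: "q > 0" using assms(2) unfolding q_def \<Psi>_def .
  have pnn: "p i \<ge> 0" for i using psd_diag[OF psd] unfolding p_def by blast
  have diagzero: "\<not> p i > 0 \<Longrightarrow> \<rho> $ i $ i = 0" for i
    using psd_diag[OF psd, of i] pnn[of i] unfolding p_def by (simp add: complex_eq_iff)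
  have rowzero: "\<not> p i > 0 \<Longrightarrow> \<rho> $ i $ j = 0 \<and> \<rho> $ j $ i = 0" for i j
    using psd_zero_row[OF psd diagzero] by blast
  have psum: "(\<Sum>i\<in>UNIV. p i) = 1"
  proof -
    have "(\<Sum>i\<in>UNIV. \<rho> $ i $ i) = 1" using assms(1) unfolding density_def by simp
    then have "Re (\<Sum>i\<in>UNIV. \<rho> $ i $ i) = 1" by simp
    then show ?thesis unfolding p_def Re_sum .
  qed
  have gs: "g i * sqrt (p i) = (if p i > 0 then 1 else 0)" for i
    unfolding g_def p_def by auto
  have Rent: "R $ i $ j = complex_of_real (g i) * \<rho> $ i $ j * complex_of_real (g j)" for i j
    unfolding R_def g_def by (rule Rmat_entry)
  have key_term: "cnj (y $ k) * R $ k $ l * y $ l = cnj (\<Psi> $ k) * \<rho> $ k $ l * \<Psi> $ l" for k l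
  proof -
    have "cnj (y $ k) * R $ k $ l * y $ l
       = cnj (\<Psi> $ k) * (complex_of_real (g k * sqrt (p k)) * \<rho> $ k $ l * complex_of_real (g l * sqrt (p l))) * \<Psi> $ l"
      unfolding y_def Rent by (simp add: algebra_simps)
    also have "complex_of_real (g k * sqrt (p k)) * \<rho> $ k $ l * complex_of_real (g l * sqrt (p l)) = \<rho> $ k $ l"
      unfolding gs using rowzero by auto
    finally show ?thesis .
  qed
  have eq: "cinner_vec y (R *v y) = cinner_vec \<Psi> (\<rho> *v \<Psi>)"
    unfolding quad_expand key_term ..
  have reinner: "Re (cinner_vec a b) = inner a b" for a b :: "complex ^ 'n"
    unfolding cinner_vec_def inner_vec_def Re_sum inner_complex_def by simp
  have Psi_norm: "cmod (\<Psi> $ i) = 1 / sqrt d" for i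
    unfolding \<Psi>_def max_coherent_def d_def by (simp add: norm_divide norm_exp_i_times)
  have ynorm: "(norm y)\<^sup>2 = 1 / d"
  proof -
    have "(norm y)\<^sup>2 = (\<Sum>i\<in>UNIV. (cmod (y $ i))\<^sup>2)"
      unfolding power2_norm_eq_inner inner_vec_def by simp
    also have "\<dots> = (\<Sum>i\<in>UNIV. p i / d)"
      by (rule sum.cong) (simp_all add: y_def norm_mult Psi_norm pnn power_divide less_imp_le[OF dpos])
    also have "\<dots> = 1 / d" using psum by (simp add: sum_divide_distrib[symmetric])
    finally show ?thesis .
  qed
  have "q = inner y (R *v y)" unfolding q_def eq[symmetric] reinner ..
  also have "\<dots> \<le> norm y * norm (R *v y)" by (rule norm_cauchy_schwarz)
  also have "\<dots> \<le> norm y * (opnorm R * norm y)"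
    unfolding opnorm_def by (rule mult_left_mono) (simp_all add: onorm)
  also have "\<dots> = opnorm R * (norm y)\<^sup>2" by (simp add: power2_eq_square)
  also have "\<dots> = opnorm R / d" using ynorm by simp
  finally have "q \<le> opnorm R / d" .
  then have opR: "d * q \<le> opnorm R" using dpos by (simp add: field_simps)
  have "log 2 d + log 2 q = log 2 (d * q)" using dpos qpos by (simp add: log_mult)
  also have "\<dots> \<le> log 2 (opnorm R)"
  proof -
    have dq: "0 < d * q" using dpos qpos by simp
    then have "0 < opnorm R" using opR by linarith
    then show ?thesis using dq opR by (subst log_le_cancel_iff) auto
  qed
  also have "opnorm R = opnorm (proj UNIV ** R ** proj UNIV)"
  proof -
    have "proj UNIV = (mat 1 :: complex ^ 'n ^ 'n)" unfolding proj_def mat_def by simp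
    then show ?thesis by simp
  qed
  also have "log 2 (opnorm (proj UNIV ** R ** proj UNIV)) \<le> mu CARD('n) \<rho>"
    unfolding mu_def R_def
  proof (rule Max_ge)
    have "finite {I :: 'n set. I \<noteq> {} \<and> card I \<le> CARD('n)}" by simp
    then show "finite {log 2 (opnorm (proj I ** Rmat \<rho> ** proj I)) |I. I \<noteq> {} \<and> card I \<le> CARD('n)}"
      by (rule finite_image_set)
    show "log 2 (opnorm (proj UNIV ** Rmat \<rho> ** proj UNIV)) \<in> {log 2 (opnorm (proj I ** Rmat \<rho> ** proj I)) |I. I \<noteq> {} \<and> card I \<le> CARD('n)}"
      by auto
  qed
  finally show ?thesis unfolding q_def d_def \<Psi>_def .
qed
end
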